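(* Let $G=\langle X\rangle$ be a group, let $a,b\in G$ be elements of infinite order which are not proper powers in $G$, and let $H=\langle G,t\mid t^{-1}at=b\rangle$ be the HNN-extension of $G$ associated to the isomorphism $\langle a\rangle\to\langle b\rangle$, $a\mapsto b$. Then for every $g_0\in G$, if $g_0$ is not a proper power in $G$, then its image in $H$ is not a proper power in $H$.
   Context: An element $g$ of a group $K$ is a proper power in $K$ if $g=h^k$ for some $h\in K$ and some integer $k\ge2$. *)

theory Defs
  imports "HOL-Algebra.Algebra"
begin

definition proper_power :: "('g, 'm) monoid_scheme \<Rightarrow> 'g \<Rightarrow> bool" where
  "proper_power K g \<longleftrightarrow> (\<exists>h \<in> carrier K. \<exists>k::int. k \<ge> 2 \<and> g = h [^]\<^bsub>K\<^esub> k)"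

text \<open>Words are lists over letters Inl g (g in G), Inr True (= t), Inr False (= t^-1).\<close>
inductive hnn_rel :: "('g, 'm) monoid_scheme \<Rightarrow> 'g \<Rightarrow> 'g \<Rightarrow> ('g + bool) list \<Rightarrow> ('g + bool) list \<Rightarrow> bool"
  for G a b where
  mult_rel: "x \<in> carrier G \<Longrightarrow> y \<in> carrier G \<Longrightarrow> hnn_rel G a b [Inl x, Inl y] [Inl (x \<otimes>\<^bsub>G\<^esub> y)]"
| one_rel: "hnn_rel G a b [Inl \<one>\<^bsub>G\<^esub>] []"
| t_tinv: "hnn_rel G a b [Inr True, Inr False] []"
| tinv_t: "hnn_rel G a b [Inr False, Inr True] []"
| conj_rel: "hnn_rel G a b [Inr False, Inl a, Inr True] [Inl b]"
| refl: "hnn_rel G a b w w"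
| sym: "hnn_rel G a b u v \<Longrightarrow> hnn_rel G a b v u"
| trans: "hnn_rel G a b u v \<Longrightarrow> hnn_rel G a b v w \<Longrightarrow> hnn_rel G a b u w"
| ctxt: "hnn_rel G a b u v \<Longrightarrow> hnn_rel G a b (p @ u @ q) (p @ v @ q)"

definition hnn_words :: "('g, 'm) monoid_scheme \<Rightarrow> ('g + bool) list set" where
  "hnn_words G = {w. \<forall>x \<in> set w. case x of Inl g \<Rightarrow> g \<in> carrier G | Inr _ \<Rightarrow> True}"

definition hnn_class :: "('g, 'm) monoid_scheme \<Rightarrow> 'g \<Rightarrow> 'g \<Rightarrow> ('g + bool) list \<Rightarrow> ('g + bool) list set" where
  "hnn_class G a b w = {v. hnn_rel G a b w v}"

definition hnn_ext :: "('g, 'm) monoid_scheme \<Rightarrow> 'g \<Rightarrow> 'g \<Rightarrow> ('g + bool) list set monoid" where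
  "hnn_ext G a b =
     \<lparr> partial_object.carrier = hnn_class G a b ` hnn_words G,
       monoid.mult = (\<lambda>U V. {w. \<exists>u. u \<in> U \<and> (\<exists>v. v \<in> V \<and> hnn_rel G a b (u @ v) w)}),
       monoid.one = hnn_class G a b [] \<rparr>"

definition hnn_inc :: "('g, 'm) monoid_scheme \<Rightarrow> 'g \<Rightarrow> 'g \<Rightarrow> 'g \<Rightarrow> ('g + bool) list set" where
  "hnn_inc G a b g = hnn_class G a b [Inl g]"

end

theory Submission
  imports Defs
begin

fun tw :: "(bool \<times> 'g) list \<Rightarrow> ('g + bool) list" where
  "tw [] = []"
| "tw ((e, g) # L) = Inr e # Inl g # tw L"

definition to_word :: "'g \<times> (bool \<times> 'g) list \<Rightarrow> ('g + bool) list" where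
  "to_word h = Inl (fst h) # tw (snd h)"

fun tc :: "('g + bool) list \<Rightarrow> nat" where
  "tc [] = 0"
| "tc (Inl _ # w) = tc w"
| "tc (Inr _ # w) = Suc (tc w)"

lemma tc_append[simp]: "tc (u @ v) = tc u + tc v"
  by (induction u rule: tc.induct) auto

lemma tc_tw[simp]: "tc (tw L) = length L"
  by (induction L) auto

lemma tw_append[simp]: "tw (L @ M) = tw L @ tw M"
  by (induction L) auto

definition pow_word :: "('g + bool) list \<Rightarrow> nat \<Rightarrow> ('g + bool) list" where
  "pow_word w n = concat (replicate n w)"

lemma pow_word_0[simp]: "pow_word w 0 = []"
  by (simp add: pow_word_def)
lemma pow_word_Suc: "pow_word w (Suc n) = w @ pow_word w n"
  by (simp add: pow_word_def)
lemma pow_word_Suc2: "pow_word w (Suc n) = pow_word w n @ w"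
  by (simp add: pow_word_def replicate_append_same[symmetric])
lemma pow_word_mult: "pow_word w (k * m) = pow_word (pow_word w k) m"
  by (induction m) (auto simp: pow_word_def replicate_add)

fun il :: "('g, 'm) monoid_scheme \<Rightarrow> ('g + bool) \<Rightarrow> ('g + bool)" where
  "il G (Inl g) = Inl (inv\<^bsub>G\<^esub> g)"
| "il G (Inr e) = Inr (\<not> e)"

fun iw :: "('g, 'm) monoid_scheme \<Rightarrow> ('g + bool) list \<Rightarrow> ('g + bool) list" where
  "iw G [] = []"
| "iw G (x # w) = iw G w @ [il G x]"

locale hnnctx = group G for G (structure) +
  fixes a b
  assumes a: "a \<in> carrier G" and b: "b \<in> carrier G"
    and oa: "ord a = 0" and ob: "ord b = 0"
begin

abbreviation R where "R \<equiv> hnn_rel G a b"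

lemma R_refl[simp,intro]: "R u u" by (rule hnn_rel.refl)
lemma R_sym: "R u v \<Longrightarrow> R v u" by (rule hnn_rel.sym)
lemma R_trans[trans]: "R u v \<Longrightarrow> R v w \<Longrightarrow> R u w" by (rule hnn_rel.trans)

lemma R_app: "R u u' \<Longrightarrow> R v v' \<Longrightarrow> R (u @ v) (u' @ v')"
proof -
  assume 1: "R u u'" and 2: "R v v'"
  have "R ([] @ u @ v) ([] @ u' @ v)" by (rule hnn_rel.ctxt[OF 1])
  moreover have "R (u' @ v @ []) (u' @ v' @ [])" by (rule hnn_rel.ctxt[OF 2])
  ultimately show ?thesis by (auto intro: R_trans)
qed

lemma R_ctx: "R u v \<Longrightarrow> R (p @ u @ q) (p @ v @ q)" by (rule hnn_rel.ctxt)

lemma R_appL: "R v v' \<Longrightarrow> R (u @ v) (u @ v')" by (rule R_app) auto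
lemma R_appR: "R u u' \<Longrightarrow> R (u @ v) (u' @ v)" by (rule R_app) auto
lemma R_cons: "R v v' \<Longrightarrow> R (x # v) (x # v')" using R_appL[of v v' "[x]"] by simp

lemma R_mult: "x \<in> carrier G \<Longrightarrow> y \<in> carrier G \<Longrightarrow> R [Inl x, Inl y] [Inl (x \<otimes> y)]"
  by (rule hnn_rel.mult_rel)
lemma R_one: "R [Inl \<one>] []" by (rule hnn_rel.one_rel)

lemma R_tt: "R [Inr e, Inr (\<not> e)] []"
  by (cases e) (auto intro: hnn_rel.t_tinv hnn_rel.tinv_t)

lemma R_ginv: "g \<in> carrier G \<Longrightarrow> R [Inl g, Inl (inv g)] []"
  using R_mult[of g "inv g"] R_one by (auto intro: R_trans)
lemma R_invg: "g \<in> carrier G \<Longrightarrow> R [Inl (inv g), Inl g] []"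
  using R_mult[of "inv g" g] R_one by (auto intro: R_trans)

lemma R_letter_inv: "x \<in> set w \<Longrightarrow> w \<in> hnn_words G \<Longrightarrow> R [x, il G x] [] \<and> R [il G x, x] []"
  by (cases x) (auto simp: hnn_words_def R_ginv R_invg R_tt intro: R_tt[of "\<not> _", simplified])

lemma words_append[simp]: "u @ v \<in> hnn_words G \<longleftrightarrow> u \<in> hnn_words G \<and> v \<in> hnn_words G"
  by (auto simp: hnn_words_def)
lemma words_Cons[simp]: "x # v \<in> hnn_words G \<longleftrightarrow> (case x of Inl g \<Rightarrow> g \<in> carrier G | Inr _ \<Rightarrow> True) \<and> v \<in> hnn_words G"
  by (auto simp: hnn_words_def)
lemma words_Nil[simp]: "[] \<in> hnn_words G"
  by (auto simp: hnn_words_def)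

lemma iw_words: "w \<in> hnn_words G \<Longrightarrow> iw G w \<in> hnn_words G"
  by (induction w) (auto split: sum.splits)

lemma tc_iw[simp]: "tc (iw G w) = tc w"
proof (induction w)
  case (Cons x w) then show ?case by (cases x) auto
qed simp

lemma R_iw: "w \<in> hnn_words G \<Longrightarrow> R (w @ iw G w) [] \<and> R (iw G w @ w) []"
proof (induction w)
  case Nil then show ?case by simp
next
  case (Cons x w)
  have wW: "w \<in> hnn_words G" and xl: "R [x, il G x] [] \<and> R [il G x, x] []"
    using Cons.prems R_letter_inv[of x "x # w"] by (auto simp: hnn_words_def)
  have "R ([x] @ (w @ iw G w) @ [il G x]) ([x] @ [] @ [il G x])"
    using Cons.IH wW by (intro R_app) auto
  then have 1: "R ((x # w) @ iw G (x # w)) []" using xl by (auto intro: R_trans)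
  have "R (iw G w @ ([il G x, x]) @ w) (iw G w @ [] @ w)"
    using xl by (intro R_app) auto
  then have 2: "R (iw G (x # w) @ (x # w)) []" using Cons.IH wW by (auto intro: R_trans)
  show ?case using 1 2 by simp
qed

fun syl :: "('a + bool) list \<Rightarrow> 'a \<times> (bool \<times> 'a) list" where
  "syl [] = (\<one>, [])"
| "syl (Inl g # w) = (g \<otimes> fst (syl w), snd (syl w))"
| "syl (Inr e # w) = (\<one>, (e, fst (syl w)) # snd (syl w))"

definition cw :: "'a \<times> (bool \<times> 'a) list \<Rightarrow> bool" where
  "cw h \<longleftrightarrow> fst h \<in> carrier G \<and> (\<forall>x \<in> set (snd h). snd x \<in> carrier G)"

lemma syl_R: "w \<in> hnn_words G \<Longrightarrow> R w (to_word (syl w)) \<and> cw (syl w)"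
proof (induction w rule: syl.induct)
  case 1 then show ?case using R_sym[OF R_one] by (simp add: to_word_def cw_def)
next
  case (2 g w)
  then have g: "g \<in> carrier G" and IH: "R w (to_word (syl w))" "cw (syl w)" by auto
  have "R (Inl g # w) (Inl g # to_word (syl w))" by (rule R_cons[OF IH(1)])
  also have "R (Inl g # to_word (syl w)) ([Inl g, Inl (fst (syl w))] @ tw (snd (syl w)))"
    by (simp add: to_word_def)
  also have "R ... ([Inl (g \<otimes> fst (syl w))] @ tw (snd (syl w)))"
    using IH g by (intro R_appR R_mult) (auto simp: cw_def)
  finally show ?case using IH g by (auto simp: to_word_def cw_def)
next
  case (3 e w)
  then have IH: "R w (to_word (syl w))" "cw (syl w)" by auto
  have "R (Inr e # w) ([] @ Inr e # to_word (syl w))" using R_cons[OF IH(1)] by simp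
  also have "R ... ([Inl \<one>] @ Inr e # to_word (syl w))"
    by (intro R_appR R_sym[OF R_one])
  finally show ?case using IH by (auto simp: to_word_def cw_def)
qed

definition sub :: "bool \<Rightarrow> 'a" where "sub e = (if e then b else a)"
definition oth :: "bool \<Rightarrow> 'a" where "oth e = (if e then a else b)"

lemma sub_c[simp]: "sub e \<in> carrier G" and oth_c[simp]: "oth e \<in> carrier G"
  using a b by (auto simp: sub_def oth_def)
lemma oth_sub: "oth e = sub (\<not> e)" and sub_oth: "sub e = oth (\<not> e)"
  by (auto simp: sub_def oth_def)

lemma R_conj_nat: "R [Inr False, Inl (a [^] (n::nat)), Inr True] [Inl (b [^] n)]"
proof (induction n)
  case 0
  have "R [Inr False, Inl \<one>, Inr True] ([Inr False] @ [] @ [Inr True])"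
    using R_ctx[OF R_one, of "[Inr False]" "[Inr True]"] by simp
  also have "R ... []" using R_tt[of False] by simp
  also have "R [] [Inl \<one>]" by (rule R_sym[OF R_one])
  finally show ?case by simp
next
  case (Suc n)
  have "R [Inr False, Inl (a [^] Suc n), Inr True] ([Inr False] @ [Inl (a [^] n), Inl a] @ [Inr True])"
    using R_ctx[OF R_sym[OF R_mult[of "a [^] n" a]], of "[Inr False]" "[Inr True]"] a by simp
  also have "R ... ([Inr False, Inl (a [^] n)] @ [Inr True, Inr False] @ [Inl a, Inr True])"
    using R_ctx[OF R_sym[OF R_tt[of True]], of "[Inr False, Inl (a [^] n)]" "[Inl a, Inr True]"] by simp
  also have "R ... ([Inr False, Inl (a [^] n), Inr True] @ [Inr False, Inl a, Inr True])" by simp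
  also have "R ... ([Inl (b [^] n)] @ [Inl b])"
    using Suc by (intro R_app hnn_rel.conj_rel) 
  also have "R ... [Inl (b [^] Suc n)]" using b R_mult[of "b [^] n" b] by simp
  finally show ?case .
qed

lemma R_conj_inv:
  assumes c: "c \<in> carrier G" and d: "d \<in> carrier G"
    and h: "R [Inr False, Inl c, Inr True] [Inl d]"
  shows "R [Inr False, Inl (inv c), Inr True] [Inl (inv d)]"
proof -
  have "R [Inr False, Inl c, Inr True, Inr False, Inl (inv c), Inr True] ([Inr False, Inl c] @ [] @ [Inl (inv c), Inr True])"
    using R_ctx[OF R_tt[of True], of "[Inr False, Inl c]" "[Inl (inv c), Inr True]"] by simp
  also have "R ... ([Inr False] @ [] @ [Inr True])"
    using R_ctx[OF R_ginv[OF c], of "[Inr False]" "[Inr True]"] by simp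
  also have "R ... []" using R_tt[of False] by simp
  finally have 1: "R [Inr False, Inl c, Inr True, Inr False, Inl (inv c), Inr True] []" .
  have "R [Inl (inv d)] ([Inl (inv d)] @ [Inr False, Inl c, Inr True, Inr False, Inl (inv c), Inr True] @ [])"
    using R_ctx[OF R_sym[OF 1], of "[Inl (inv d)]" "[]"] by simp
  also have "R ... ([Inl (inv d)] @ [Inl d] @ [Inr False, Inl (inv c), Inr True])"
    using R_ctx[OF h, of "[Inl (inv d)]" "[Inr False, Inl (inv c), Inr True]"] by simp
  also have "R ... ([] @ [] @ [Inr False, Inl (inv c), Inr True])"
    using R_ctx[OF R_invg[OF d], of "[]" "[Inr False, Inl (inv c), Inr True]"] by simp
  finally have "R [Inl (inv d)] [Inr False, Inl (inv c), Inr True]" by simp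
  then show ?thesis by (rule R_sym)
qed

lemma R_conj_int: "R [Inr False, Inl (a [^] (m::int)), Inr True] [Inl (b [^] m)]"
proof (cases "m \<ge> 0")
  case True
  then show ?thesis using R_conj_nat[of "nat m"] by (simp add: pow_nat)
next
  case False
  define n where "n = nat (- m)"
  have m: "m = - int n" using False n_def by simp
  have "R [Inr False, Inl (inv (a [^] n)), Inr True] [Inl (inv (b [^] n))]"
    by (rule R_conj_inv[OF nat_pow_closed[OF a] nat_pow_closed[OF b] R_conj_nat[of n]])
  then show ?thesis unfolding m int_pow_neg_int[OF a] int_pow_neg_int[OF b] .
qed

lemma R_pinch: "R [Inr e, Inl (sub e [^] (m::int)), Inr (\<not> e)] [Inl (oth e [^] m)]"
proof (cases e)
  case False then show ?thesis using R_conj_int by (simp add: sub_def oth_def)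
next
  case True
  have "R [Inr True, Inl (b [^] m), Inr False] ([Inr True] @ [Inr False, Inl (a [^] m), Inr True] @ [Inr False])"
    using R_ctx[OF R_sym[OF R_conj_int[of m]], of "[Inr True]" "[Inr False]"] by simp
  also have "R ... ([] @ [Inl (a [^] m)] @ [Inr True, Inr False])"
    using R_ctx[OF R_tt[of True], of "[]" "[Inl (a [^] m), Inr True, Inr False]"] by simp
  also have "R ... ([Inl (a [^] m)] @ [] @ [])"
    using R_ctx[OF R_tt[of True], of "[Inl (a [^] m)]" "[]"] by simp
  finally show ?thesis using True by (simp add: sub_def oth_def)
qed

end


context hnnctx
begin

definition gp :: "'a \<Rightarrow> 'a set" where "gp c = range (\<lambda>m::int. c [^] m)"
definition cst :: "'a \<Rightarrow> 'a \<Rightarrow> 'a set" where "cst c g = (\<lambda>m::int. c [^] m \<otimes> g) ` UNIV"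
definition rep :: "'a \<Rightarrow> 'a \<Rightarrow> 'a" where
  "rep c g = (if \<one> \<in> cst c g then \<one> else (SOME r. r \<in> cst c g))"
definition exn :: "'a \<Rightarrow> 'a \<Rightarrow> int" where
  "exn c g = (THE m. g = c [^] m \<otimes> rep c g)"

definition gen :: "'a \<Rightarrow> bool" where "gen c \<longleftrightarrow> c \<in> carrier G \<and> ord c = 0"

lemma gen_sub[simp]: "gen (sub e)" and gen_oth[simp]: "gen (oth e)"
  using a b oa ob by (auto simp: gen_def sub_def oth_def)

lemma pow_inj: "gen c \<Longrightarrow> c [^] (m::int) = c [^] n \<Longrightarrow> m = n"
  by (auto simp: gen_def int_pow_eq)

lemma cst_mult: "gen c \<Longrightarrow> g \<in> carrier G \<Longrightarrow> cst c (c [^] (m::int) \<otimes> g) = cst c g"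
proof -
  assume c: "gen c" and g: "g \<in> carrier G"
  then have cc: "c \<in> carrier G" by (simp add: gen_def)
  have 1: "\<And>k::int. c [^] k \<otimes> (c [^] m \<otimes> g) = c [^] (k + m) \<otimes> g"
    using cc g by (simp add: int_pow_mult m_assoc)
  show "cst c (c [^] m \<otimes> g) = cst c g"
  proof (rule Set.set_eqI)
    fix x
    show "x \<in> cst c (c [^] m \<otimes> g) \<longleftrightarrow> x \<in> cst c g"
    proof
      assume "x \<in> cst c (c [^] m \<otimes> g)"
      then obtain k :: int where "x = c [^] k \<otimes> (c [^] m \<otimes> g)" unfolding cst_def by (blast elim: rangeE)
      then have "x = c [^] (k + m) \<otimes> g" using 1 by simp
      then show "x \<in> cst c g" unfolding cst_def by (intro image_eqI[where x="k + m"]) simp_all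
    next
      assume "x \<in> cst c g"
      then obtain k :: int where "x = c [^] k \<otimes> g" unfolding cst_def by (blast elim: rangeE)
      then have "x = c [^] (k - m) \<otimes> (c [^] m \<otimes> g)" using 1[of "k - m"] by simp
      then show "x \<in> cst c (c [^] m \<otimes> g)" unfolding cst_def by (intro image_eqI[where x="k - m"]) simp_all
    qed
  qed
qed

lemma g_in_cst: "gen c \<Longrightarrow> g \<in> carrier G \<Longrightarrow> g \<in> cst c g"
proof -
  assume c: "gen c" and g: "g \<in> carrier G"
  have "g = c [^] (0::int) \<otimes> g" using g by simp
  then show "g \<in> cst c g" unfolding cst_def by (intro image_eqI[where x="0::int"]) simp_all
qed

lemma rep_in: "gen c \<Longrightarrow> g \<in> carrier G \<Longrightarrow> rep c g \<in> cst c g"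
proof -
  assume c: "gen c" and g: "g \<in> carrier G"
  show "rep c g \<in> cst c g"
  proof (cases "\<one> \<in> cst c g")
    case True then show ?thesis by (simp add: rep_def)
  next
    case False then show ?thesis unfolding rep_def using someI[of "\<lambda>r. r \<in> cst c g", OF g_in_cst[OF c g]] by simp
  qed
qed

lemma cst_carrier: "gen c \<Longrightarrow> g \<in> carrier G \<Longrightarrow> x \<in> cst c g \<Longrightarrow> x \<in> carrier G"
  by (auto simp: cst_def gen_def)

lemma rep_c[simp]: "gen c \<Longrightarrow> g \<in> carrier G \<Longrightarrow> rep c g \<in> carrier G"
  using rep_in cst_carrier by blast

lemma rep_cst: "gen c \<Longrightarrow> g \<in> carrier G \<Longrightarrow> rep c (c [^] (m::int) \<otimes> g) = rep c g"
  unfolding rep_def using cst_mult by simp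

lemma dec_ex: "gen c \<Longrightarrow> g \<in> carrier G \<Longrightarrow> \<exists>m::int. g = c [^] m \<otimes> rep c g"
proof -
  assume c: "gen c" and g: "g \<in> carrier G"
  then have cc: "c \<in> carrier G" by (simp add: gen_def)
  obtain k where k: "rep c g = c [^] (k::int) \<otimes> g" using rep_in[OF c g] by (auto simp: cst_def)
  have "c [^] (- k) \<otimes> rep c g = (c [^] (-k) \<otimes> c [^] k) \<otimes> g" using k cc g by (simp add: m_assoc)
  also have "... = g" using cc g by (simp flip: int_pow_mult)
  finally show ?thesis by metis
qed

lemma dec_uniq: "gen c \<Longrightarrow> r \<in> carrier G \<Longrightarrow> c [^] (m::int) \<otimes> r = c [^] n \<otimes> r \<Longrightarrow> m = n"
  using pow_inj by (auto simp: gen_def)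

lemma dec: "gen c \<Longrightarrow> g \<in> carrier G \<Longrightarrow> g = c [^] exn c g \<otimes> rep c g"
proof -
  assume c: "gen c" and g: "g \<in> carrier G"
  obtain m :: int where m: "g = c [^] m \<otimes> rep c g" using dec_ex[OF c g] by blast
  have "exn c g = m" unfolding exn_def
    by (rule the_equality[where P="\<lambda>m. g = c [^] m \<otimes> rep c g", OF m]) (metis m dec_uniq[OF c rep_c[OF c g]])
  then show ?thesis using m by simp
qed

lemma ex_eq: "gen c \<Longrightarrow> r \<in> carrier G \<Longrightarrow> rep c r = r \<Longrightarrow> exn c (c [^] (m::int) \<otimes> r) = m"
proof -
  assume c: "gen c" and r: "r \<in> carrier G" and rr: "rep c r = r"
  have cc: "c \<in> carrier G" using c by (simp add: gen_def)
  have g: "c [^] m \<otimes> r \<in> carrier G" using cc r by simp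
  have "c [^] m \<otimes> r = c [^] exn c (c [^] m \<otimes> r) \<otimes> r"
    using dec[OF c g] rep_cst[OF c r, of m] rr by simp
  then show ?thesis using dec_uniq[OF c r] by metis
qed

lemma rep_pow_mult: "gen c \<Longrightarrow> r \<in> carrier G \<Longrightarrow> rep c r = r \<Longrightarrow> rep c (c [^] (m::int) \<otimes> r) = r"
  using rep_cst by simp

lemma rep_one: "gen c \<Longrightarrow> rep c \<one> = \<one>"
  unfolding rep_def using g_in_cst[of c \<one>] by simp

lemma rep_rep: "gen c \<Longrightarrow> g \<in> carrier G \<Longrightarrow> rep c (rep c g) = rep c g"
proof -
  assume c: "gen c" and g: "g \<in> carrier G"
  have "rep c g = rep c (c [^] exn c g \<otimes> rep c g)" using dec[OF c g] by simp
  also have "... = rep c (rep c g)" by (rule rep_cst[OF c rep_c[OF c g]])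
  finally show "rep c (rep c g) = rep c g" by simp
qed

lemma rep_one_iff: "gen c \<Longrightarrow> g \<in> carrier G \<Longrightarrow> rep c g = \<one> \<longleftrightarrow> g \<in> gp c"
proof
  assume c: "gen c" and g: "g \<in> carrier G" and r: "rep c g = \<one>"
  then have "g = c [^] exn c g" using dec[OF c g] c by (simp add: gen_def)
  then show "g \<in> gp c" by (auto simp: gp_def)
next
  assume c: "gen c" and g: "g \<in> carrier G" and "g \<in> gp c"
  then obtain m where "g = c [^] (m::int)" by (auto simp: gp_def)
  then have "g = c [^] m \<otimes> \<one>" using c by (simp add: gen_def)
  then show "rep c g = \<one>" using rep_cst[OF c one_closed, of m] rep_one[OF c] by simp
qed

lemma gp_c: "gen c \<Longrightarrow> x \<in> gp c \<Longrightarrow> x \<in> carrier G"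
  by (auto simp: gp_def gen_def)

lemma gp_mult: "gen c \<Longrightarrow> x \<in> gp c \<Longrightarrow> g \<in> carrier G \<Longrightarrow> x \<otimes> g \<in> gp c \<longleftrightarrow> g \<in> gp c"
proof -
  assume c: "gen c" and x: "x \<in> gp c" and g: "g \<in> carrier G"
  have cc: "c \<in> carrier G" using c by (simp add: gen_def)
  obtain m where m: "x = c [^] (m::int)" using x by (auto simp: gp_def)
  show ?thesis
  proof
    assume "x \<otimes> g \<in> gp c"
    then obtain k where k: "x \<otimes> g = c [^] (k::int)" by (auto simp: gp_def)
    have "g = c [^] (-m) \<otimes> (x \<otimes> g)" using m cc g
      by (simp add: m_assoc[symmetric] flip: int_pow_mult)
    also have "... = c [^] (-m + k)" using k cc by (simp only: int_pow_mult)
    finally show "g \<in> gp c" by (auto simp: gp_def)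
  next
    assume "g \<in> gp c"
    then obtain k where k: "g = c [^] (k::int)" by (auto simp: gp_def)
    then have "x \<otimes> g = c [^] (m + k)" using m cc by (simp add: int_pow_mult)
    then show "x \<otimes> g \<in> gp c" by (auto simp: gp_def)
  qed
qed

end


context hnnctx
begin

fun nrm :: "(bool \<times> 'a) list \<Rightarrow> bool" where
  "nrm [] = True"
| "nrm ((e, r) # s) = (r \<in> carrier G \<and> rep (sub e) r = r \<and> nrm s \<and> (r = \<one> \<longrightarrow> s = [] \<or> fst (hd s) = e))"

definition Om :: "('a \<times> (bool \<times> 'a) list) set" where
  "Om = {w. fst w \<in> carrier G \<and> nrm (snd w)}"

definition act_t :: "bool \<Rightarrow> 'a \<times> (bool \<times> 'a) list \<Rightarrow> 'a \<times> (bool \<times> 'a) list" where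
  "act_t e w = (let r = rep (sub e) (fst w); m = exn (sub e) (fst w); s = snd w in
     if r = \<one> \<and> s \<noteq> [] \<and> fst (hd s) = (\<not> e) then (oth e [^] m \<otimes> snd (hd s), tl s)
     else (oth e [^] m, (e, r) # s))"

fun act_l :: "('a + bool) \<Rightarrow> 'a \<times> (bool \<times> 'a) list \<Rightarrow> 'a \<times> (bool \<times> 'a) list" where
  "act_l (Inl g) w = (if g \<in> carrier G then (g \<otimes> fst w, snd w) else w)"
| "act_l (Inr e) w = act_t e w"

definition act :: "('a + bool) list \<Rightarrow> 'a \<times> (bool \<times> 'a) list \<Rightarrow> 'a \<times> (bool \<times> 'a) list" where
  "act u w = foldr act_l u w"

lemma act_Nil[simp]: "act [] w = w" by (simp add: act_def)
lemma act_Cons[simp]: "act (x # u) w = act_l x (act u w)" by (simp add: act_def)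
lemma act_append[simp]: "act (u @ v) w = act u (act v w)" by (simp add: act_def)

lemma act_t_dec:
  assumes g: "g = sub e [^] (m::int) \<otimes> r" and r: "r \<in> carrier G" and rr: "rep (sub e) r = r"
  shows "act_t e (g, s) = (if r = \<one> \<and> s \<noteq> [] \<and> fst (hd s) = (\<not> e)
            then (oth e [^] m \<otimes> snd (hd s), tl s) else (oth e [^] m, (e, r) # s))"
proof -
  have 1: "rep (sub e) g = r" using g rep_pow_mult[OF gen_sub r rr] by simp
  have 2: "exn (sub e) g = m" using g ex_eq[OF gen_sub r rr] by simp
  show ?thesis unfolding act_t_def Let_def using 1 2 by simp
qed

lemma dec_sub:
  assumes g: "g \<in> carrier G"
  obtains m r where "g = sub e [^] (m::int) \<otimes> r" "r \<in> carrier G" "rep (sub e) r = r"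
  using dec[OF gen_sub g] rep_c[OF gen_sub g] rep_rep[OF gen_sub g] by blast

lemma nrm_Cons_hd: "nrm s \<Longrightarrow> s \<noteq> [] \<Longrightarrow> snd (hd s) \<in> carrier G \<and> rep (sub (fst (hd s))) (snd (hd s)) = snd (hd s)
   \<and> nrm (tl s) \<and> (snd (hd s) = \<one> \<longrightarrow> tl s = [] \<or> fst (hd (tl s)) = fst (hd s))"
  by (cases s) auto

lemma act_t_Om:
  assumes w: "w \<in> Om" shows "act_t e w \<in> Om"
proof -
  obtain g s where ws: "w = (g, s)" by (cases w)
  have g: "g \<in> carrier G" and s: "nrm s" using w ws by (auto simp: Om_def)
  obtain m r where d: "g = sub e [^] (m::int) \<otimes> r" "r \<in> carrier G" "rep (sub e) r = r"
    using dec_sub[OF g] by blast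
  show ?thesis
  proof (cases "r = \<one> \<and> s \<noteq> [] \<and> fst (hd s) = (\<not> e)")
    case True
    then show ?thesis unfolding ws act_t_dec[OF d] using nrm_Cons_hd[OF s] by (simp add: Om_def)
  next
    case False
    then show ?thesis unfolding ws act_t_dec[OF d] using s d by (auto simp: Om_def)
  qed
qed

lemma oth_not: "oth (\<not> e) = sub e" and sub_not: "sub (\<not> e) = oth e"
  by (auto simp: oth_def sub_def)

lemma pow_c[simp]: "oth e [^] (m::int) \<in> carrier G" "sub e [^] (m::int) \<in> carrier G"
  by auto

lemma act_t_inv:
  assumes w: "w \<in> Om" shows "act_t (\<not> e) (act_t e w) = w"
proof -
  obtain g s where ws: "w = (g, s)" by (cases w)
  have g: "g \<in> carrier G" and s: "nrm s" using w ws by (auto simp: Om_def)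
  obtain m r where d: "g = sub e [^] (m::int) \<otimes> r" "r \<in> carrier G" "rep (sub e) r = r"
    using dec_sub[OF g] by blast
  show ?thesis
  proof (cases "r = \<one> \<and> s \<noteq> [] \<and> fst (hd s) = (\<not> e)")
    case True
    then obtain r1 s' where s1: "s = (\<not> e, r1) # s'" by (cases s) auto
    have r1: "r1 \<in> carrier G" "rep (oth e) r1 = r1" and n1: "r1 = \<one> \<longrightarrow> s' = [] \<or> fst (hd s') = (\<not> e)"
      using s s1 by (auto simp: sub_not)
    have 1: "act_t e w = (oth e [^] m \<otimes> r1, s')" unfolding ws act_t_dec[OF d] using True s1 by simp
    have d2: "oth e [^] m \<otimes> r1 = sub (\<not> e) [^] m \<otimes> r1" "rep (sub (\<not> e)) r1 = r1"
      using r1 by (auto simp: sub_not)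
    have 3: "\<not> (r1 = \<one> \<and> s' \<noteq> [] \<and> fst (hd s') = (\<not> \<not> e))" using n1 by auto
    show ?thesis unfolding 1 act_t_dec[OF d2(1) r1(1) d2(2)] if_not_P[OF 3] using d True s1 ws
      by (simp add: oth_not)
  next
    case False
    have 1: "act_t e w = (oth e [^] m, (e, r) # s)" unfolding ws act_t_dec[OF d] if_not_P[OF False] by simp
    have d2: "oth e [^] m = sub (\<not> e) [^] m \<otimes> \<one>" by (simp add: sub_not)
    show ?thesis unfolding 1 act_t_dec[OF d2 one_closed rep_one[OF gen_sub]] using d ws
      by (simp add: oth_not sub_not)
  qed
qed

lemma act_conj:
  assumes w: "w \<in> Om"
  shows "act_t False (act_l (Inl a) (act_t True w)) = act_l (Inl b) w"
proof -
  obtain g s where ws: "w = (g, s)" by (cases w)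
  have g: "g \<in> carrier G" and s: "nrm s" using w ws by (auto simp: Om_def)
  obtain m r where d: "g = sub True [^] (m::int) \<otimes> r" "r \<in> carrier G" "rep (sub True) r = r"
    using dec_sub[OF g] by blast
  have ab: "sub True = b" "oth True = a" "sub False = a" "oth False = b"
    by (auto simp: sub_def oth_def)
  have am: "a \<otimes> a [^] m = a [^] (m + 1)" "b \<otimes> b [^] m = b [^] (m + 1)"
    using a b by (simp_all add: int_pow_mult add.commute[of m 1])
  show ?thesis
  proof (cases "r = \<one> \<and> s \<noteq> [] \<and> fst (hd s) = (\<not> True)")
    case True
    then obtain r1 s' where s1: "s = (False, r1) # s'" by (cases s) auto
    have r1: "r1 \<in> carrier G" "rep a r1 = r1" and n1: "r1 = \<one> \<longrightarrow> s' = [] \<or> fst (hd s') = False"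
      using s s1 by (auto simp: ab)
    have 1: "act_t True w = (a [^] m \<otimes> r1, s')" unfolding ws act_t_dec[OF d] using True s1 ab by simp
    have 2: "act_l (Inl a) (a [^] m \<otimes> r1, s') = (a [^] (m + 1) \<otimes> r1, s')"
      using a r1 am by (simp add: m_assoc[symmetric])
    have d2: "a [^] (m + 1) \<otimes> r1 = sub False [^] (m + 1) \<otimes> r1" "rep (sub False) r1 = r1"
      using r1 ab by auto
    have 3: "\<not> (r1 = \<one> \<and> s' \<noteq> [] \<and> fst (hd s') = (\<not> False))" using n1 by auto
    have 4: "act_l (Inl b) w = (b [^] (m + 1), s)"
      using ws d True b am ab by (simp add: m_assoc[symmetric])
    show ?thesis unfolding 1 2 act_t_dec[OF d2(1) r1(1) d2(2)] if_not_P[OF 3] 4 using s1 ab by simp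
  next
    case False
    have 1: "act_t True w = (a [^] m, (True, r) # s)" unfolding ws act_t_dec[OF d] if_not_P[OF False] using ab by simp
    have 2: "act_l (Inl a) (a [^] m, (True, r) # s) = (a [^] (m + 1) \<otimes> \<one>, (True, r) # s)"
      using a am by simp
    have d2: "a [^] (m + 1) \<otimes> \<one> = sub False [^] (m + 1) \<otimes> \<one>" using ab by simp
    have 4: "act_l (Inl b) w = (b [^] (m + 1) \<otimes> r, s)"
      using ws d b am ab by (simp add: m_assoc[symmetric])
    have 5: "(\<one> = \<one> \<and> (True, r) # s \<noteq> [] \<and> fst (hd ((True, r) # s)) = (\<not> False))" by simp
    show ?thesis unfolding 1 2 act_t_dec[OF d2 one_closed rep_one[OF gen_sub]] if_P[OF 5] 4 using ab by simp
  qed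
qed

lemma act_l_Om: "w \<in> Om \<Longrightarrow> act_l x w \<in> Om"
proof (cases x)
  case (Inl g) assume "w \<in> Om" then show ?thesis using Inl by (auto simp: Om_def)
next
  case (Inr e) assume "w \<in> Om" then show ?thesis using Inr act_t_Om by simp
qed

lemma act_Om: "w \<in> Om \<Longrightarrow> act u w \<in> Om"
  by (induction u) (auto simp: act_l_Om)

lemma act_R: "R u v \<Longrightarrow> w \<in> Om \<Longrightarrow> act u w = act v w"
proof (induction arbitrary: w rule: hnn_rel.induct)
  case (mult_rel x y) then show ?case by (auto simp: m_assoc Om_def)
next
  case one_rel then show ?case by (auto simp: Om_def)
next
  case t_tinv then show ?case using act_t_inv[of w False] by simp
next
  case tinv_t then show ?case using act_t_inv[of w True] by simp
next
  case conj_rel then show ?case using act_conj by simp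
next
  case refl then show ?case by simp
next
  case (sym u v) then show ?case by simp
next
  case (trans u v x) then show ?case by simp
next
  case (ctxt u v p q) then show ?case using act_Om by simp
qed

lemma len_act_t: "length (snd (act_t e w)) \<le> Suc (length (snd w)) \<and> length (snd w) \<le> Suc (length (snd (act_t e w)))"
  unfolding act_t_def Let_def by (cases "snd w") auto

lemma len_act: "length (snd (act u w)) \<le> length (snd w) + tc u \<and> length (snd w) \<le> length (snd (act u w)) + tc u"
proof (induction u rule: tc.induct)
  case 1 then show ?case by simp
next
  case (2 g u) then show ?case by auto
next
  case (3 e u) then show ?case using len_act_t[of e "act u w"] by auto
qed

end


context hnnctx
begin

definition pinch :: "bool \<Rightarrow> 'a \<Rightarrow> bool \<Rightarrow> bool" where
  "pinch e u e' \<longleftrightarrow> e' = (\<not> e) \<and> u \<in> gp (sub e)"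

fun red :: "(bool \<times> 'a) list \<Rightarrow> bool" where
  "red [] = True"
| "red [x] = True"
| "red ((e, g) # (e', g') # L) = (\<not> pinch e g e' \<and> red ((e', g') # L))"

definition cl :: "(bool \<times> 'a) list \<Rightarrow> bool" where
  "cl L \<longleftrightarrow> (\<forall>x \<in> set L. snd x \<in> carrier G)"

lemma gp_closed_mult: "gen c \<Longrightarrow> x \<in> gp c \<Longrightarrow> y \<in> gp c \<Longrightarrow> x \<otimes> y \<in> gp c"
  using gp_mult gp_c by blast

lemma gp_closed_inv: "gen c \<Longrightarrow> x \<in> gp c \<Longrightarrow> inv x \<in> gp c"
proof -
  assume c: "gen c" and x: "x \<in> gp c"
  obtain m :: int where m: "x = c [^] m" using x by (auto simp: gp_def)
  have "inv x = c [^] (- m)" using m c by (simp add: gen_def int_pow_neg)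
  then show ?thesis by (auto simp: gp_def)
qed

lemma gp_mult_r: "gen c \<Longrightarrow> x \<in> gp c \<Longrightarrow> g \<in> carrier G \<Longrightarrow> g \<otimes> x \<in> gp c \<Longrightarrow> g \<in> gp c"
proof -
  assume c: "gen c" and x: "x \<in> gp c" and g: "g \<in> carrier G" and gx: "g \<otimes> x \<in> gp c"
  have xc: "x \<in> carrier G" using gp_c[OF c x] .
  have "g = (g \<otimes> x) \<otimes> inv x" using g xc by (simp add: m_assoc)
  then show ?thesis using gp_closed_mult[OF c gx gp_closed_inv[OF c x]] by simp
qed

lemma core:
  assumes "L \<noteq> []" "red L" "cl L" "d \<in> carrier G"
    and "s = [] \<or> \<not> pinch (fst (last L)) (snd (last L) \<otimes> d) (fst (hd s))"
  shows "\<exists>c s'. act (tw L) (d, s) = (c, s') \<and> c \<in> gp (oth (fst (hd L))) \<and> s' \<noteq> []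
            \<and> fst (hd s') = fst (hd L) \<and> length s' = length L + length s"
  using assms
proof (induction L rule: red.induct)
  case 1 then show ?case by simp
next
  case (2 x)
  obtain e1 g1 where x: "x = (e1, g1)" by (cases x)
  have g1: "g1 \<in> carrier G" using 2 x by (simp add: cl_def)
  have gd: "g1 \<otimes> d \<in> carrier G" using g1 2 by simp
  obtain m r where d: "g1 \<otimes> d = sub e1 [^] (m::int) \<otimes> r" "r \<in> carrier G" "rep (sub e1) r = r"
    using dec_sub[OF gd] by blast
  have np: "\<not> (r = \<one> \<and> s \<noteq> [] \<and> fst (hd s) = (\<not> e1))"
  proof
    assume h: "r = \<one> \<and> s \<noteq> [] \<and> fst (hd s) = (\<not> e1)"
    then have "g1 \<otimes> d \<in> gp (sub e1)" using d by (auto simp: gp_def)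
    then show False using 2(5) h x by (auto simp: pinch_def)
  qed
  have "act (tw [x]) (d, s) = (oth e1 [^] m, (e1, r) # s)"
    using x act_t_dec[OF d, of s] np g1 by simp
  then show ?case using x by (auto simp: gp_def)
next
  case (3 e1 g1 e2 g2 L)
  have g1: "g1 \<in> carrier G" using 3 by (simp add: cl_def)
  have IHa: "(e2, g2) # L \<noteq> []" "red ((e2, g2) # L)" "cl ((e2, g2) # L)" using 3 by (auto simp: cl_def)
  have lst: "last ((e1, g1) # (e2, g2) # L) = last ((e2, g2) # L)" by simp
  obtain c s' where IH: "act (tw ((e2, g2) # L)) (d, s) = (c, s')" "c \<in> gp (oth e2)" "s' \<noteq> []"
     "fst (hd s') = e2" "length s' = length ((e2, g2) # L) + length s"
    using 3(1)[OF IHa 3(5)] 3(6) lst by auto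
  have cc: "c \<in> carrier G" using gp_c[OF gen_oth IH(2)] .
  have gc: "g1 \<otimes> c \<in> carrier G" using g1 cc by simp
  obtain m r where d: "g1 \<otimes> c = sub e1 [^] (m::int) \<otimes> r" "r \<in> carrier G" "rep (sub e1) r = r"
    using dec_sub[OF gc] by blast
  have np: "\<not> (r = \<one> \<and> s' \<noteq> [] \<and> fst (hd s') = (\<not> e1))"
  proof
    assume h: "r = \<one> \<and> s' \<noteq> [] \<and> fst (hd s') = (\<not> e1)"
    then have "g1 \<otimes> c \<in> gp (sub e1)" using d by (auto simp: gp_def)
    moreover have "c \<in> gp (sub e1)" using IH(2) IH(4) h by (auto simp: oth_sub)
    ultimately have "g1 \<in> gp (sub e1)" using gp_mult_r[OF gen_sub _ g1] by blast
    then show False using 3(3) h IH(4) by (auto simp: pinch_def)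
  qed
  have "act (tw ((e1, g1) # (e2, g2) # L)) (d, s) = act_t e1 (g1 \<otimes> c, s')"
    using IH(1) g1 by simp
  also have "... = (oth e1 [^] m, (e1, r) # s')"
    using act_t_dec[OF d, of s'] np by simp
  finally show ?case using IH(5) by (auto simp: gp_def)
qed

definition cyc :: "'a \<times> (bool \<times> 'a) list \<Rightarrow> bool" where
  "cyc h \<longleftrightarrow> \<not> pinch (fst (last (snd h))) (snd (last (snd h)) \<otimes> fst h) (fst (hd (snd h)))"

lemma core_pow:
  assumes L: "L \<noteq> []" "red L" "cl L" and g0: "g0 \<in> carrier G" and cy: "cyc (g0, L)"
  shows "length (snd (act (pow_word (to_word (g0, L)) j) (\<one>, []))) = j * length L
     \<and> (j \<noteq> 0 \<longrightarrow> (\<exists>c s. act (pow_word (to_word (g0, L)) j) (\<one>, []) = (g0 \<otimes> c, s)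
          \<and> c \<in> gp (oth (fst (hd L))) \<and> s \<noteq> [] \<and> fst (hd s) = fst (hd L)))"
proof (induction j)
  case 0 then show ?case by simp
next
  case (Suc j)
  obtain d s where ds: "act (pow_word (to_word (g0, L)) j) (\<one>, []) = (d, s)" by (cases "act (pow_word (to_word (g0, L)) j) (\<one>, [])")
  have dc: "d \<in> carrier G \<and> (s = [] \<or> \<not> pinch (fst (last L)) (snd (last L) \<otimes> d) (fst (hd s)))"
  proof (cases "j = 0")
    case True then show ?thesis using ds by auto
  next
    case False
    then obtain c where c: "d = g0 \<otimes> c" "c \<in> gp (oth (fst (hd L)))" "s \<noteq> []" "fst (hd s) = fst (hd L)"
      using Suc.IH ds by auto
    have cc: "c \<in> carrier G" using gp_c[OF gen_oth c(2)] .
    have gl: "snd (last L) \<in> carrier G" using L by (simp add: cl_def)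
    have "\<not> pinch (fst (last L)) (snd (last L) \<otimes> d) (fst (hd s))"
    proof
      assume p: "pinch (fst (last L)) (snd (last L) \<otimes> d) (fst (hd s))"
      then have e: "fst (hd L) = (\<not> fst (last L))" using c by (simp add: pinch_def)
      have "c \<in> gp (sub (fst (last L)))" using c(2) e by (simp add: oth_sub)
      moreover have "(snd (last L) \<otimes> g0) \<otimes> c \<in> gp (sub (fst (last L)))"
        using p c gl g0 cc by (simp add: pinch_def m_assoc)
      ultimately have "snd (last L) \<otimes> g0 \<in> gp (sub (fst (last L)))"
        using gp_mult_r[OF gen_sub] gl g0 by blast
      then show False using cy e by (simp add: cyc_def pinch_def)
    qed
    then show ?thesis using c g0 cc by simp
  qed
  obtain c s' where cr: "act (tw L) (d, s) = (c, s')" "c \<in> gp (oth (fst (hd L)))" "s' \<noteq> []"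
     "fst (hd s') = fst (hd L)" "length s' = length L + length s"
    using core[OF L, of d s] dc by blast
  have "act (pow_word (to_word (g0, L)) (Suc j)) (\<one>, []) = act (to_word (g0, L)) (d, s)"
    by (simp add: pow_word_Suc ds)
  also have "... = (g0 \<otimes> c, s')" using cr g0 by (simp add: to_word_def)
  finally show ?case using cr Suc.IH ds by auto
qed

end


context hnnctx
begin

lemma R_merge: "x \<in> carrier G \<Longrightarrow> y \<in> carrier G \<Longrightarrow> R (p @ [Inl x, Inl y] @ q) (p @ [Inl (x \<otimes> y)] @ q)"
  using R_ctx[OF R_mult] by blast

lemma reduce:
  assumes "\<not> red L" "cl L" "g0 \<in> carrier G"
  shows "\<exists>g0' L'. R (to_word (g0, L)) (to_word (g0', L')) \<and> length L' + 2 = length L \<and> cl L' \<and> g0' \<in> carrier G"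
  using assms
proof (induction L arbitrary: g0 rule: red.induct)
  case 1 then show ?case by simp
next
  case (2 x) then show ?case by simp
next
  case (3 e g e' g' L)
  have g: "g \<in> carrier G" and g': "g' \<in> carrier G" and cL: "cl L" using 3 by (auto simp: cl_def)
  show ?case
  proof (cases "pinch e g e'")
    case True
    then obtain m :: int where m: "g = sub e [^] m" and e': "e' = (\<not> e)" by (auto simp: pinch_def gp_def)
    define c where "c = oth e [^] m"
    have cc: "c \<in> carrier G" by (simp add: c_def)
    have "to_word (g0, (e, g) # (e', g') # L) = [Inl g0] @ [Inr e, Inl (sub e [^] m), Inr (\<not> e)] @ (Inl g' # tw L)"
      by (simp add: to_word_def m e')
    also have "R ... ([Inl g0] @ [Inl c] @ (Inl g' # tw L))"
      unfolding c_def by (rule R_ctx[OF R_pinch])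
    also have "... = [] @ [Inl g0, Inl c] @ (Inl g' # tw L)" by simp
    also have "R ... ([] @ [Inl (g0 \<otimes> c)] @ (Inl g' # tw L))" by (rule R_merge[OF 3(4) cc])
    also have "... = [] @ [Inl (g0 \<otimes> c), Inl g'] @ tw L" by simp
    also have "R ... ([] @ [Inl (g0 \<otimes> c \<otimes> g')] @ tw L)" by (rule R_merge) (use 3(4) cc g' in simp_all)
    also have "... = to_word (g0 \<otimes> c \<otimes> g', L)" by (simp add: to_word_def)
    finally show ?thesis using cL 3(4) cc g' by fastforce
  next
    case False
    then have nr: "\<not> red ((e', g') # L)" using 3(2) by simp
    obtain g1 L1 where IH: "R (to_word (g, (e', g') # L)) (to_word (g1, L1))" "length L1 + 2 = length ((e', g') # L)" "cl L1" "g1 \<in> carrier G"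
      using 3(1)[OF nr _ g] 3(3) by (auto simp: cl_def)
    have "to_word (g0, (e, g) # (e', g') # L) = [Inl g0, Inr e] @ to_word (g, (e', g') # L) @ []"
      by (simp add: to_word_def)
    also have "R ... ([Inl g0, Inr e] @ to_word (g1, L1) @ [])" by (rule R_ctx[OF IH(1)])
    also have "... = to_word (g0, (e, g1) # L1)" by (simp add: to_word_def)
    finally show ?thesis using IH 3(4) by (auto simp: cl_def intro!: exI[of _ g0] exI[of _ "(e, g1) # L1"])
  qed
qed

definition mulr :: "'a \<times> (bool \<times> 'a) list \<Rightarrow> 'a \<Rightarrow> 'a \<times> (bool \<times> 'a) list" where
  "mulr h c = (if snd h = [] then (fst h \<otimes> c, []) else (fst h, butlast (snd h) @ [(fst (last (snd h)), snd (last (snd h)) \<otimes> c)]))"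

lemma mulr:
  assumes "cl L" "g \<in> carrier G" "c \<in> carrier G"
  shows "R (to_word (g, L) @ [Inl c]) (to_word (mulr (g, L) c)) \<and> length (snd (mulr (g, L) c)) = length L
    \<and> cl (snd (mulr (g, L) c)) \<and> fst (mulr (g, L) c) \<in> carrier G"
proof (cases "L = []")
  case True
  have "R ([] @ [Inl g, Inl c] @ []) ([] @ [Inl (g \<otimes> c)] @ [])" by (rule R_merge) (use assms in simp_all)
  then show ?thesis using True assms by (simp add: to_word_def mulr_def cl_def)
next
  case False
  then obtain L' e x where L: "L = L' @ [(e, x)]" by (metis rev_exhaust surj_pair)
  have x: "x \<in> carrier G" and cL': "cl L'" using assms L by (auto simp: cl_def)
  have "to_word (g, L) @ [Inl c] = (Inl g # tw L' @ [Inr e]) @ [Inl x, Inl c] @ []" by (simp add: L to_word_def)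
  also have "R ... ((Inl g # tw L' @ [Inr e]) @ [Inl (x \<otimes> c)] @ [])" by (rule R_merge[OF x assms(3)])
  also have "... = to_word (mulr (g, L) c)" by (simp add: L to_word_def mulr_def)
  finally show ?thesis using L assms x cL' by (auto simp: mulr_def cl_def)
qed

lemma R_pow: "R u v \<Longrightarrow> R (pow_word u k) (pow_word v k)"
  by (induction k) (auto simp: pow_word_Suc intro: R_app)

lemma pow_word_add: "pow_word w (i + j) = pow_word w i @ pow_word w j"
  by (simp add: pow_word_def replicate_add)

lemma R_pow_conj:
  assumes "R (Zi @ Z) []" "R (Z @ Zi) []" "R H (Z @ H' @ Zi)"
  shows "R (pow_word H k) (Z @ pow_word H' k @ Zi)"
proof (induction k)
  case 0 then show ?case using R_sym[OF assms(2)] by simp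
next
  case (Suc k)
  have "pow_word H (Suc k) = H @ pow_word H k" by (simp add: pow_word_Suc)
  also have "R ... ((Z @ H' @ Zi) @ (Z @ pow_word H' k @ Zi))" by (rule R_app[OF assms(3) Suc])
  also have "... = (Z @ H') @ (Zi @ Z) @ (pow_word H' k @ Zi)" by simp
  also have "R ... ((Z @ H') @ [] @ (pow_word H' k @ Zi))" by (rule R_ctx[OF assms(1)])
  also have "... = Z @ pow_word H' (Suc k) @ Zi" by (simp add: pow_word_Suc)
  finally show ?case .
qed

lemma R_pow_single: "g \<in> carrier G \<Longrightarrow> R (pow_word [Inl g] k) [Inl (g [^] k)]"
proof (induction k)
  case 0 then show ?case using R_sym[OF R_one] by simp
next
  case (Suc k)
  have "pow_word [Inl g] (Suc k) = [Inl g] @ pow_word [Inl g] k" by (simp add: pow_word_Suc)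
  also have "R ... ([Inl g] @ [Inl (g [^] k)])" by (rule R_appL[OF Suc.IH[OF Suc.prems]])
  also have "R ... [Inl (g \<otimes> g [^] k)]" using R_mult[of g "g [^] k"] Suc.prems by simp
  also have "g \<otimes> g [^] k = g [^] Suc k" using Suc.prems by (rule nat_pow_Suc2[symmetric])
  finally show ?case .
qed

lemma cancel1: "x \<in> carrier G \<Longrightarrow> y \<in> carrier G \<Longrightarrow> x \<otimes> (inv x \<otimes> y) = y"
  by (simp add: m_assoc[symmetric])
lemma cancel2: "x \<in> carrier G \<Longrightarrow> y \<in> carrier G \<Longrightarrow> inv x \<otimes> (x \<otimes> y) = y"
  by (simp add: m_assoc[symmetric])

definition nPP :: "'a \<Rightarrow> bool" where "nPP y \<longleftrightarrow> y \<in> carrier G \<and> \<not> proper_power G y"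

lemma pp_nat: "h \<in> carrier G \<Longrightarrow> n \<ge> 2 \<Longrightarrow> \<not> nPP (h [^] (n::nat))"
  unfolding nPP_def proper_power_def
  by (metis int_pow_int of_nat_le_iff of_nat_numeral)

lemma nPP_inv: "nPP y \<Longrightarrow> nPP (inv y)"
proof -
  assume y: "nPP y"
  have yc: "y \<in> carrier G" using y by (simp add: nPP_def)
  show "nPP (inv y)" unfolding nPP_def
  proof (intro conjI notI)
    show "inv y \<in> carrier G" using yc by simp
    assume "proper_power G (inv y)"
    then obtain h k where h: "h \<in> carrier G" "(k::int) \<ge> 2" "inv y = h [^] k" by (auto simp: proper_power_def)
    have "y = inv (inv y)" using yc by simp
    also have "... = inv (h [^] k)" using h by simp
    also have "... = inv h [^] k" using h by (simp add: int_pow_inv)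
    finally have "y = inv h [^] k" .
    then have "proper_power G y" using h by (auto simp: proper_power_def)
    then show False using y by (simp add: nPP_def)
  qed
qed

lemma conj_pow_nat: "x \<in> carrier G \<Longrightarrow> h \<in> carrier G \<Longrightarrow> (x \<otimes> h \<otimes> inv x) [^] (n::nat) = x \<otimes> h [^] n \<otimes> inv x"
proof (induction n)
  case 0 then show ?case by simp
next
  case (Suc n)
  have "(x \<otimes> h \<otimes> inv x) [^] Suc n = (x \<otimes> h [^] n \<otimes> inv x) \<otimes> (x \<otimes> h \<otimes> inv x)" using Suc by simp
  also have "... = x \<otimes> (h [^] n \<otimes> h) \<otimes> inv x" using Suc.prems by (simp add: m_assoc cancel2)
  finally show ?case by simp
qed

lemma nPP_conj: "nPP y \<Longrightarrow> x \<in> carrier G \<Longrightarrow> nPP (inv x \<otimes> y \<otimes> x)"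
proof -
  assume y: "nPP y" and x: "x \<in> carrier G"
  have yc: "y \<in> carrier G" using y by (simp add: nPP_def)
  show "nPP (inv x \<otimes> y \<otimes> x)" unfolding nPP_def
  proof (intro conjI notI)
    show "inv x \<otimes> y \<otimes> x \<in> carrier G" using yc x by simp
    assume "proper_power G (inv x \<otimes> y \<otimes> x)"
    then obtain h k where h: "h \<in> carrier G" "(k::int) \<ge> 2" "inv x \<otimes> y \<otimes> x = h [^] k" by (auto simp: proper_power_def)
    have hk: "h [^] k = h [^] (nat k)" using h(2) by (simp add: pow_nat)
    have "y = x \<otimes> (inv x \<otimes> y \<otimes> x) \<otimes> inv x" using x yc by (simp add: m_assoc cancel1)
    also have "... = x \<otimes> h [^] (nat k) \<otimes> inv x" using h(3) hk by simp
    also have "... = (x \<otimes> h \<otimes> inv x) [^] (nat k)" using conj_pow_nat[OF x h(1)] by simp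
    also have "... = (x \<otimes> h \<otimes> inv x) [^] k" using h(2) by (simp add: pow_nat)
    finally have "proper_power G y" using h x by (auto simp: proper_power_def)
    then show False using y by (simp add: nPP_def)
  qed
qed

lemma nPP_gen_pow:
  assumes c: "gen c" and p: "nPP (c [^] (m::int))"
  shows "m = 1 \<or> m = -1"
proof (rule ccontr)
  assume "\<not> (m = 1 \<or> m = -1)"
  then consider "m = 0" | "m \<ge> 2" | "m \<le> -2" by linarith
  then show False
  proof cases
    case 1
    have "proper_power G (c [^] m)" unfolding proper_power_def using 1
      by (intro bexI[of _ \<one>] exI[of _ "2::int"]) simp_all
    then show False using p by (auto simp: nPP_def)
  next
    case 2
    then show False using p c by (auto simp: nPP_def proper_power_def gen_def)
  next
    case 3
    have cc: "c \<in> carrier G" using c by (simp add: gen_def)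
    have "c [^] m = inv (c [^] (- m))" using cc by (metis int_pow_neg minus_minus)
    also have "... = inv c [^] (- m)" using cc by (simp add: int_pow_inv)
    finally have "proper_power G (c [^] m)" unfolding proper_power_def using 3 cc
      by (intro bexI[of _ "inv c"] exI[of _ "- m"]) simp_all
    then show False using p by (auto simp: nPP_def)
  qed
qed

end

locale hnnctx2 = hnnctx +
  assumes pa: "\<not> proper_power G a" and pb: "\<not> proper_power G b"
begin

lemma nPP_sub: "nPP (sub e)" and nPP_oth: "nPP (oth e)"
  using pa pb a b by (auto simp: sub_def oth_def nPP_def)

lemma nPP_pow1: "m = 1 \<or> m = -1 \<Longrightarrow> nPP (sub e [^] (m::int))"
  using nPP_sub[of e] nPP_inv[OF nPP_sub[of e]] by (auto simp: int_pow_neg)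

end


context hnnctx2
begin

lemma e0_Om: "(\<one>, []) \<in> Om" by (simp add: Om_def)

lemma P:
  "length L = n \<Longrightarrow> cl L \<Longrightarrow> x0 \<in> carrier G \<Longrightarrow> nPP y \<Longrightarrow> z \<in> carrier G \<Longrightarrow>
   R ([Inl y] @ to_word (x0, L)) (to_word (x0, L) @ [Inl z]) \<Longrightarrow> nPP z"
proof (induction n arbitrary: L x0 y rule: less_induct)
  case (less n)
  note Ln = less.prems(1) and cL = less.prems(2) and x0 = less.prems(3) and y = less.prems(4)
    and z = less.prems(5) and H = less.prems(6)
  have yc: "y \<in> carrier G" using y by (simp add: nPP_def)
  consider (nr) "\<not> red L" | (nil) "L = []" | (cons) e1 g1 L' where "L = (e1, g1) # L'" "red L"
    by (cases L) auto
  then show ?case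
  proof cases
    case nr
    obtain x0' L' where r: "R (to_word (x0, L)) (to_word (x0', L'))" "length L' + 2 = length L" "cl L'" "x0' \<in> carrier G"
      using reduce[OF nr cL x0] by blast
    have "R ([Inl y] @ to_word (x0', L')) ([Inl y] @ to_word (x0, L))" by (rule R_appL[OF R_sym[OF r(1)]])
    also have "R ... (to_word (x0, L) @ [Inl z])" by (rule H)
    also have "R ... (to_word (x0', L') @ [Inl z])" by (rule R_appR[OF r(1)])
    finally show ?thesis using less.IH[of "length L'" L' x0' y] r Ln y z by simp
  next
    case nil
    have "act ([Inl y] @ to_word (x0, L)) (\<one>, []) = act (to_word (x0, L) @ [Inl z]) (\<one>, [])"
      by (rule act_R[OF H e0_Om])
    then have "y \<otimes> x0 = x0 \<otimes> z" using nil yc x0 z by (simp add: to_word_def)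
    then have "inv x0 \<otimes> y \<otimes> x0 = z" using x0 yc z by (simp add: m_assoc cancel2)
    then show ?thesis using nPP_conj[OF y x0] by simp
  next
    case cons
    define u where "u = inv x0 \<otimes> y \<otimes> x0"
    have nu: "nPP u" unfolding u_def by (rule nPP_conj[OF y x0])
    have uc: "u \<in> carrier G" using nu by (simp add: nPP_def)
    have g1: "g1 \<in> carrier G" and cL': "cl L'" using cL cons by (auto simp: cl_def)
    define XW where "XW = to_word (g1, L')"
    have tL: "to_word (x0, L) = [Inl x0, Inr e1] @ XW" by (simp add: XW_def cons to_word_def)
    have "[Inl u, Inr e1] @ XW = [] @ [Inl (inv x0 \<otimes> y \<otimes> x0)] @ (Inr e1 # XW)" by (simp add: u_def)
    also have "R ... ([] @ [Inl (inv x0 \<otimes> y), Inl x0] @ (Inr e1 # XW))"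
      by (rule R_sym[OF R_merge]) (use x0 yc in simp_all)
    also have "... = [] @ [Inl (inv x0 \<otimes> y)] @ (Inl x0 # Inr e1 # XW)" by simp
    also have "R ... ([] @ [Inl (inv x0), Inl y] @ (Inl x0 # Inr e1 # XW))"
      by (rule R_sym[OF R_merge]) (use x0 yc in simp_all)
    also have "... = [Inl (inv x0)] @ ([Inl y] @ to_word (x0, L))" by (simp add: tL)
    also have "R ... ([Inl (inv x0)] @ (to_word (x0, L) @ [Inl z]))" by (rule R_appL[OF H])
    also have "... = [] @ [Inl (inv x0), Inl x0] @ (Inr e1 # XW @ [Inl z])" by (simp add: tL)
    also have "R ... ([] @ [] @ (Inr e1 # XW @ [Inl z]))" by (rule R_ctx[OF R_invg[OF x0]])
    finally have s1: "R ([Inl u, Inr e1] @ XW) ([Inr e1] @ XW @ [Inl z])" by simp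
    have "[Inr (\<not> e1), Inl u, Inr e1] @ XW = [Inr (\<not> e1)] @ ([Inl u, Inr e1] @ XW)" by simp
    also have "R ... ([Inr (\<not> e1)] @ ([Inr e1] @ XW @ [Inl z]))" by (rule R_appL[OF s1])
    also have "R ... (XW @ [Inl z])" using R_ctx[OF R_tt[of "\<not> e1"], of "[]" "XW @ [Inl z]"] by simp
    finally have s2: "R ([Inr (\<not> e1), Inl u, Inr e1] @ XW) (XW @ [Inl z])" .
    show ?thesis
    proof (cases "pinch (\<not> e1) u e1")
      case True
      then obtain m :: int where m: "u = sub (\<not> e1) [^] m" by (auto simp: pinch_def gp_def)
      have m1: "m = 1 \<or> m = -1" using nPP_gen_pow[OF gen_sub, of "\<not> e1" m] nu m by simp
      have "R [Inr (\<not> e1), Inl u, Inr e1] [Inl (sub e1 [^] m)]"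
        using R_pinch[of "\<not> e1" m] m by (simp add: oth_not)
      then have "R ([Inl (sub e1 [^] m)] @ XW) (XW @ [Inl z])"
        using R_trans[OF R_appR[OF R_sym] s2] by blast
      then show ?thesis using less.IH[of "length L'" L' g1 "sub e1 [^] m"] nPP_pow1[OF m1] Ln cons cL' g1 z
        by (simp add: XW_def)
    next
      case False
      have rd: "red ((\<not> e1, u) # (e1, g1) # L')" using False cons by simp
      have cl2: "cl ((\<not> e1, u) # (e1, g1) # L')" using cL' g1 uc by (simp add: cl_def)
      obtain c s' where cr: "act (tw ((\<not> e1, u) # (e1, g1) # L')) (\<one>, []) = (c, s')"
        "length s' = length ((\<not> e1, u) # (e1, g1) # L') + length ([] :: (bool \<times> 'a) list)"
        using core[OF _ rd cl2, of \<one> "[]"] by auto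
      have tw2: "tw ((\<not> e1, u) # (e1, g1) # L') = [Inr (\<not> e1), Inl u, Inr e1] @ XW"
        by (simp add: XW_def to_word_def)
      have "act ([Inr (\<not> e1), Inl u, Inr e1] @ XW) (\<one>, []) = act (XW @ [Inl z]) (\<one>, [])"
        by (rule act_R[OF s2 e0_Om])
      then have "act (tw ((\<not> e1, u) # (e1, g1) # L')) (\<one>, []) = act (XW @ [Inl z]) (\<one>, [])"
        using tw2 by (simp only:)
      then have "s' = snd (act (XW @ [Inl z]) (\<one>, []))" using cr(1) by (metis snd_conv)
      then have "length s' = length (snd (act (XW @ [Inl z]) (\<one>, [])))" by simp
      also have "... \<le> tc (XW @ [Inl z])" using len_act[of "XW @ [Inl z]" "(\<one>, [])"] by simp
      also have "... = length L'" by (simp add: XW_def to_word_def)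
      finally show ?thesis using cr by simp
    qed
  qed
qed

end


context hnnctx2
begin

lemma nil_case:
  assumes g0: "g0 \<in> carrier G" and k: "2 \<le> k" and x: "x \<in> hnn_words G" and y: "nPP y"
  shows "\<not> R (pow_word (to_word (g0, [])) k @ x) (x @ [Inl y])"
proof
  assume A: "R (pow_word (to_word (g0, [])) k @ x) (x @ [Inl y])"
  define z where "z = g0 [^] k"
  have zc: "z \<in> carrier G" using g0 by (simp add: z_def)
  have "R ([Inl z] @ x) (pow_word [Inl g0] k @ x)" unfolding z_def by (rule R_appR[OF R_sym[OF R_pow_single[OF g0]]])
  also have "R ... (x @ [Inl y])" using A by (simp add: to_word_def)
  finally have B: "R ([Inl z] @ x) (x @ [Inl y])" .
  define W where "W = iw G x"
  have W: "W \<in> hnn_words G" using iw_words[OF x] by (simp add: W_def)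
  have iw1: "R (x @ W) []" and iw2: "R (W @ x) []" using R_iw[OF x] by (auto simp: W_def)
  have "W @ [Inl z] = (W @ [Inl z]) @ []" by simp
  also have "R ... ((W @ [Inl z]) @ (x @ W))" by (rule R_appL[OF R_sym[OF iw1]])
  also have "... = W @ ([Inl z] @ x) @ W" by simp
  also have "R ... (W @ (x @ [Inl y]) @ W)" by (rule R_ctx[OF B])
  also have "... = [] @ (W @ x) @ ([Inl y] @ W)" by simp
  also have "R ... ([] @ [] @ ([Inl y] @ W))" by (rule R_ctx[OF iw2])
  finally have C0: "R (W @ [Inl z]) ([] @ [] @ ([Inl y] @ W))" .
  have C: "R ([Inl y] @ W) (W @ [Inl z])" using R_sym[OF C0] by simp
  obtain w0 LW where sw: "syl W = (w0, LW)" by (cases "syl W")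
  have sR: "R W (to_word (w0, LW))" and cw: "cw (w0, LW)" using syl_R[OF W] sw by auto
  have "R ([Inl y] @ to_word (w0, LW)) ([Inl y] @ W)" by (rule R_appL[OF R_sym[OF sR]])
  also have "R ... (W @ [Inl z])" by (rule C)
  also have "R ... (to_word (w0, LW) @ [Inl z])" by (rule R_appR[OF sR])
  finally have D: "R ([Inl y] @ to_word (w0, LW)) (to_word (w0, LW) @ [Inl z])" .
  have "nPP z" using P[OF HOL.refl _ _ y zc D] cw by (simp add: cw_def cl_def)
  then show False using pp_nat[OF g0 k] by (simp add: z_def)
qed

lemma cyc_case:
  assumes L: "L \<noteq> []" "red L" "cl L" and g0: "g0 \<in> carrier G" and cy: "cyc (g0, L)"
    and k: "2 \<le> k" and x: "x \<in> hnn_words G" and y: "nPP y"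
  shows "\<not> R (pow_word (to_word (g0, L)) k @ x) (x @ [Inl y])"
proof
  assume A: "R (pow_word (to_word (g0, L)) k @ x) (x @ [Inl y])"
  define H where "H = to_word (g0, L)"
  have yc: "y \<in> carrier G" using y by (simp add: nPP_def)
  have pm: "R (pow_word H (k * m) @ x) (x @ [Inl (y [^] m)])" for m :: nat
  proof (induction m)
    case 0
    have "x @ [Inl (y [^] (0::nat))] = x @ [Inl \<one>] @ []" by simp
    also have "R ... (x @ [] @ [])" by (rule R_ctx[OF R_one])
    finally have "R (x @ [Inl (y [^] (0::nat))]) (x @ [] @ [])" .
    then show ?case using R_sym by simp
  next
    case (Suc m)
    have "pow_word H (k * Suc m) @ x = pow_word H k @ (pow_word H (k * m) @ x) @ []"
      by (simp add: pow_word_add)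
    also have "R ... (pow_word H k @ (x @ [Inl (y [^] m)]) @ [])" by (rule R_ctx[OF Suc.IH])
    also have "... = (pow_word H k @ x) @ [Inl (y [^] m)]" by simp
    also have "R ... ((x @ [Inl y]) @ [Inl (y [^] m)])" using A by (intro R_appR) (simp add: H_def)
    also have "... = x @ [Inl y, Inl (y [^] m)] @ []" by simp
    also have "R ... (x @ [Inl (y \<otimes> y [^] m)] @ [])" by (rule R_merge) (use yc in simp_all)
    also have "y \<otimes> y [^] m = y [^] Suc m" using yc by (rule nat_pow_Suc2[symmetric])
    finally show ?case by simp
  qed
  define m0 where "m0 = Suc (2 * tc x)"
  have "pow_word H (k * m0) = pow_word H (k * m0) @ [] @ []" by simp
  also have "R ... (pow_word H (k * m0) @ (x @ iw G x) @ [])" by (rule R_ctx[OF R_sym]) (use R_iw[OF x] in simp)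
  also have "... = (pow_word H (k * m0) @ x) @ iw G x" by simp
  also have "R ... ((x @ [Inl (y [^] m0)]) @ iw G x)" by (rule R_appR[OF pm])
  finally have B: "R (pow_word H (k * m0)) ((x @ [Inl (y [^] m0)]) @ iw G x)" .
  have "act (pow_word H (k * m0)) (\<one>, []) = act ((x @ [Inl (y [^] m0)]) @ iw G x) (\<one>, [])"
    by (rule act_R[OF B e0_Om])
  then have "k * m0 * length L = length (snd (act ((x @ [Inl (y [^] m0)]) @ iw G x) (\<one>, [])))"
    using core_pow[OF L g0 cy, of "k * m0"] by (simp add: H_def)
  also have "... \<le> tc ((x @ [Inl (y [^] m0)]) @ iw G x)"
    using len_act[of "(x @ [Inl (y [^] m0)]) @ iw G x" "(\<one>, [])"] by simp
  also have "... = 2 * tc x" by simp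
  finally have "k * m0 * length L \<le> 2 * tc x" .
  moreover have "m0 \<le> k * m0 * length L"
  proof -
    have l1: "1 \<le> length L" using L(1) by (cases L) auto
    have "m0 \<le> k * m0" using k by simp
    then have "m0 * 1 \<le> (k * m0) * length L" using l1 by (rule mult_le_mono)
    then show ?thesis by simp
  qed
  ultimately show False by (simp add: m0_def)
qed

end


context hnnctx2
begin

lemma Q:
  "length L = n \<Longrightarrow> cl L \<Longrightarrow> g0 \<in> carrier G \<Longrightarrow> 2 \<le> k \<Longrightarrow> x \<in> hnn_words G \<Longrightarrow> nPP y \<Longrightarrow>
   \<not> R (pow_word (to_word (g0, L)) k @ x) (x @ [Inl y])"
proof (induction n arbitrary: L g0 x y rule: less_induct)
  case (less n)
  note Ln = less.prems(1) and cL = less.prems(2) and g0 = less.prems(3) and k = less.prems(4)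
    and x = less.prems(5) and y = less.prems(6)
  consider (nr) "\<not> red L" | (nil) "L = []" | (cy) "L \<noteq> []" "red L" "cyc (g0, L)"
    | (ncy) "L \<noteq> []" "red L" "\<not> cyc (g0, L)" by (cases "red L"; cases "L = []"; cases "cyc (g0, L)") simp_all
  then show ?case
  proof cases
    case nr
    obtain g0' L' where r: "R (to_word (g0, L)) (to_word (g0', L'))" "length L' + 2 = length L" "cl L'" "g0' \<in> carrier G"
      using reduce[OF nr cL g0] by blast
    show ?thesis
    proof
      assume A: "R (pow_word (to_word (g0, L)) k @ x) (x @ [Inl y])"
      have "R (pow_word (to_word (g0', L')) k @ x) (pow_word (to_word (g0, L)) k @ x)"
        by (rule R_appR[OF R_pow[OF R_sym[OF r(1)]]])
      also have "R ... (x @ [Inl y])" by (rule A)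
      finally show False using less.IH[of "length L'" L' g0' x y] r Ln k x y by simp
    qed
  next
    case nil then show ?thesis using nil_case[OF g0 k x y] by simp
  next
    case cy then show ?thesis using cyc_case[OF cy(1,2) cL g0 cy(3) k x y] by simp
  next
    case ncy
    define en where "en = fst (last L)"
    define gn where "gn = snd (last L)"
    define e1 where "e1 = fst (hd L)"
    have p: "pinch en (gn \<otimes> g0) e1" using ncy(3) by (simp add: cyc_def en_def gn_def e1_def)
    then have e1n: "e1 = (\<not> en)" by (simp add: pinch_def)
    obtain g1 L2 where L: "L = (e1, g1) # L2" using ncy(1) by (cases L) (auto simp: e1_def)
    have "L2 \<noteq> []" using L e1n en_def by auto
    then obtain M q where Mq: "L2 = M @ [q]" by (cases L2 rule: rev_cases) auto
    have "last L = q" using L Mq by simp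
    then have "q = (en, gn)" by (simp add: en_def gn_def)
    then have L2: "L2 = M @ [(en, gn)]" using Mq by simp
    have g1: "g1 \<in> carrier G" and cM: "cl M" and gnc: "gn \<in> carrier G" using cL L L2 by (auto simp: cl_def)
    obtain m :: int where m: "gn \<otimes> g0 = sub en [^] m" using p by (auto simp: pinch_def gp_def)
    define c where "c = oth en [^] m"
    have cc: "c \<in> carrier G" by (simp add: c_def)
    have pc: "R [Inr en, Inl (gn \<otimes> g0), Inr e1] [Inl c]" using R_pinch[of en m] m e1n by (simp add: c_def)
    obtain h' where h': "h' = mulr (g1, M) c" by blast
    have mh: "R (to_word (g1, M) @ [Inl c]) (to_word h')" "length (snd h') = length M"
      "cl (snd h')" "fst h' \<in> carrier G" using mulr[OF cM g1 cc] h' by auto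
    define Z where "Z = [Inl g0, Inr e1]"
    define Zi where "Zi = [Inr (\<not> e1), Inl (inv g0)]"
    have ZZi: "R (Z @ Zi) []"
    proof -
      have "Z @ Zi = [Inl g0] @ [Inr e1, Inr (\<not> e1)] @ [Inl (inv g0)]" by (simp add: Z_def Zi_def)
      also have "R ... ([Inl g0] @ [] @ [Inl (inv g0)])" by (rule R_ctx[OF R_tt])
      also have "R ... []" using R_ginv[OF g0] by simp
      finally show ?thesis .
    qed
    have ZiZ: "R (Zi @ Z) []"
    proof -
      have "Zi @ Z = [Inr (\<not> e1)] @ [Inl (inv g0), Inl g0] @ [Inr e1]" by (simp add: Z_def Zi_def)
      also have "R ... ([Inr (\<not> e1)] @ [] @ [Inr e1])" by (rule R_ctx[OF R_invg[OF g0]])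
      also have "R ... []" using R_tt[of "\<not> e1"] by simp
      finally show ?thesis .
    qed
    define H where "H = to_word (g0, L)"
    have s1: "R (Z @ (to_word (g1, M) @ [Inl c]) @ Zi) (Z @ to_word h' @ Zi)" by (rule R_ctx[OF mh(1)])
    have s2: "R ((Z @ to_word (g1, M)) @ [Inr en, Inl (gn \<otimes> g0), Inr e1] @ Zi) ((Z @ to_word (g1, M)) @ [Inl c] @ Zi)"
      by (rule R_ctx[OF pc])
    have s3: "R ((Z @ to_word (g1, M) @ [Inr en]) @ [Inl gn, Inl g0] @ (Inr e1 # Zi))
                ((Z @ to_word (g1, M) @ [Inr en]) @ [Inl (gn \<otimes> g0)] @ (Inr e1 # Zi))"
      by (rule R_merge[OF gnc g0])
    have s4: "R ((Z @ to_word (g1, M) @ [Inr en, Inl gn]) @ (Z @ Zi) @ [])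
                ((Z @ to_word (g1, M) @ [Inr en, Inl gn]) @ [] @ [])"
      by (rule R_ctx[OF ZZi])
    have HZ: "H = (Z @ to_word (g1, M) @ [Inr en, Inl gn]) @ [] @ []"
      by (simp add: H_def Z_def L L2 to_word_def)
    have "R H (Z @ to_word h' @ Zi)"
    proof -
      have "R H ((Z @ to_word (g1, M) @ [Inr en, Inl gn]) @ (Z @ Zi) @ [])"
        unfolding HZ by (rule R_sym[OF s4])
      also have "... = (Z @ to_word (g1, M) @ [Inr en]) @ [Inl gn, Inl g0] @ (Inr e1 # Zi)"
        by (simp add: Z_def)
      also have "R ... ((Z @ to_word (g1, M) @ [Inr en]) @ [Inl (gn \<otimes> g0)] @ (Inr e1 # Zi))" by (rule s3)
      also have "... = (Z @ to_word (g1, M)) @ [Inr en, Inl (gn \<otimes> g0), Inr e1] @ Zi" by simp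
      also have "R ... ((Z @ to_word (g1, M)) @ [Inl c] @ Zi)" by (rule s2)
      also have "... = Z @ (to_word (g1, M) @ [Inl c]) @ Zi" by simp
      also have "R ... (Z @ to_word h' @ Zi)" by (rule s1)
      finally show ?thesis .
    qed
    then have PW: "R (pow_word H k) (Z @ pow_word (to_word h') k @ Zi)" by (rule R_pow_conj[OF ZiZ ZZi])
    show ?thesis
    proof
      assume A: "R (pow_word (to_word (g0, L)) k @ x) (x @ [Inl y])"
      have "pow_word (to_word h') k @ (Zi @ x) = [] @ [] @ (pow_word (to_word h') k @ Zi @ x)" by simp
      also have "R ... ([] @ (Zi @ Z) @ (pow_word (to_word h') k @ Zi @ x))" by (rule R_ctx[OF R_sym[OF ZiZ]])
      also have "... = Zi @ (Z @ pow_word (to_word h') k @ Zi) @ x" by simp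
      also have "R ... (Zi @ pow_word H k @ x)" by (rule R_ctx[OF R_sym[OF PW]])
      also have "... = Zi @ (pow_word (to_word (g0, L)) k @ x) @ []" by (simp add: H_def)
      also have "R ... (Zi @ (x @ [Inl y]) @ [])" by (rule R_ctx[OF A])
      finally have B: "R (pow_word (to_word h') k @ (Zi @ x)) ((Zi @ x) @ [Inl y])" by simp
      have ZW: "Zi @ x \<in> hnn_words G" using x g0 by (simp add: Zi_def)
      have "length (snd h') < n" using mh(2) Ln L L2 by simp
      then have "\<not> R (pow_word (to_word (fst h', snd h')) k @ (Zi @ x)) ((Zi @ x) @ [Inl y])"
        using less.IH[of "length (snd h')" "snd h'" "fst h'" "Zi @ x" y] mh k ZW y by simp
      then show False using B by simp
    qed
  qed
qed

end


context hnnctx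
begin

lemma cls_eqD: "hnn_class G a b u = hnn_class G a b v \<Longrightarrow> R u v"
proof -
  assume e: "hnn_class G a b u = hnn_class G a b v"
  have "v \<in> hnn_class G a b v" by (simp add: hnn_class_def)
  then have "v \<in> hnn_class G a b u" using e by simp
  then show "R u v" by (simp add: hnn_class_def)
qed

lemma cls_mult: "hnn_class G a b u \<otimes>\<^bsub>hnn_ext G a b\<^esub> hnn_class G a b v = hnn_class G a b (u @ v)"
proof (rule Set.set_eqI)
  fix w
  show "w \<in> hnn_class G a b u \<otimes>\<^bsub>hnn_ext G a b\<^esub> hnn_class G a b v \<longleftrightarrow> w \<in> hnn_class G a b (u @ v)"
  proof
    assume "w \<in> hnn_class G a b u \<otimes>\<^bsub>hnn_ext G a b\<^esub> hnn_class G a b v"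
    then obtain u' v' where "R u u'" "R v v'" "R (u' @ v') w" by (auto simp: hnn_ext_def hnn_class_def)
    then have "R (u @ v) w" using R_trans[OF R_app] by blast
    then show "w \<in> hnn_class G a b (u @ v)" by (simp add: hnn_class_def)
  next
    assume "w \<in> hnn_class G a b (u @ v)"
    then have "R (u @ v) w" by (simp add: hnn_class_def)
    then show "w \<in> hnn_class G a b u \<otimes>\<^bsub>hnn_ext G a b\<^esub> hnn_class G a b v"
      unfolding hnn_ext_def hnn_class_def by simp (blast intro: R_refl)
  qed
qed

lemma cls_pow: "hnn_class G a b w [^]\<^bsub>hnn_ext G a b\<^esub> (n::nat) = hnn_class G a b (pow_word w n)"
proof (induction n)
  case 0 then show ?case by (simp add: hnn_ext_def)
next
  case (Suc n)
  have "hnn_class G a b w [^]\<^bsub>hnn_ext G a b\<^esub> Suc n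
      = hnn_class G a b w [^]\<^bsub>hnn_ext G a b\<^esub> n \<otimes>\<^bsub>hnn_ext G a b\<^esub> hnn_class G a b w" by simp
  also have "... = hnn_class G a b (pow_word w n @ w)" by (simp add: Suc cls_mult)
  finally show ?case by (simp add: pow_word_Suc2)
qed

end

theorem lemma3p14:
  fixes G :: "('g, 'm) monoid_scheme" and a b g0 :: 'g
  assumes "group G"
    and "a \<in> carrier G" and "b \<in> carrier G"
    and "group.ord G a = 0" and "group.ord G b = 0"
    and "\<not> proper_power G a" and "\<not> proper_power G b"
    and "g0 \<in> carrier G"
    and "\<not> proper_power G g0"
  shows "\<not> proper_power (hnn_ext G a b) (hnn_inc G a b g0)"
proof
  interpret hnnctx2 G a b
    using assms by (simp add: hnnctx2_def hnnctx_def hnnctx_axioms_def hnnctx2_axioms_def)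
  assume "proper_power (hnn_ext G a b) (hnn_inc G a b g0)"
  then obtain h k where h: "h \<in> carrier (hnn_ext G a b)" "(k::int) \<ge> 2"
    "hnn_inc G a b g0 = h [^]\<^bsub>hnn_ext G a b\<^esub> k"
    by (auto simp: proper_power_def)
  obtain w where w: "w \<in> hnn_words G" "h = hnn_class G a b w" using h(1) by (auto simp: hnn_ext_def)
  have "hnn_class G a b [Inl g0] = hnn_class G a b w [^]\<^bsub>hnn_ext G a b\<^esub> (nat k)"
    using h(2,3) w(2) by (simp add: hnn_inc_def pow_nat)
  also have "... = hnn_class G a b (pow_word w (nat k))" by (rule cls_pow)
  finally have A: "R [Inl g0] (pow_word w (nat k))" by (rule cls_eqD)
  obtain w0 Lw where sw: "syl w = (w0, Lw)" by (cases "syl w")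
  have sR: "R w (to_word (w0, Lw))" and cw: "cw (w0, Lw)" using syl_R[OF w(1)] sw by auto
  have "R (pow_word (to_word (w0, Lw)) (nat k) @ []) ([] @ [Inl g0])"
    using R_trans[OF R_pow[OF R_sym[OF sR]] R_sym[OF A]] by simp
  moreover have "nPP g0" using assms by (simp add: nPP_def)
  moreover have "nat 2 \<le> nat k" using h(2) by (rule nat_mono)
  then have k2: "2 \<le> nat k" by simp
  ultimately show False
    using Q[OF HOL.refl, of Lw w0 "nat k" "[]" g0] cw k2 by (simp add: cw_def cl_def)
qed


end
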